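(* Let $\boldsymbol{M}$ be a weight sequence with $\gamma(\boldsymbol{M})>0$. Then $\mathcal{M}(C_{\{\boldsymbol{M}\}}(0,\infty))\subset\Lambda_{\{\boldsymbol{M}\}}$ if and only if $\boldsymbol{M}$ satisfies $\operatorname{(dc)}$.
   Context: Sequences are of positive reals indexed by $\mathbb{N}_0$; $m_p=M_{p+1}/M_p$. Weight sequence: $M_0=1$, $M_p^2\le M_{p-1}M_{p+1}$ ($p\ge1$), $m_p\to\infty$. $\operatorname{(dc)}$: there are $C_0>0$, $H>1$ with $M_{p+1}\le C_0H^{p+1}M_p$ for all $p$. A sequence $(c_p)$ is almost increasing if $c_p\le ac_q$ for all $q\ge p$, some $a>0$; $\gamma(\boldsymbol{M})=\sup\{\mu>0:(m_p/(p+1)^\mu)_p\text{ almost increasing}\}\in[0,\infty]$. $C_{\{\boldsymbol{M}\}}(0,\infty)$ is the space of continuous $\varphi$ on $(0,\infty)$ with $\sup_p\sup_{x>0}x^p|\varphi(x)|/(h^pM_p)<\infty$ for some $h>0$. $\Lambda_{\{\boldsymbol{M}\}}$ is the space of complex sequences $(c_p)$ with $\sup_p|c_p|/(h^pM_p)<\infty$ for some $h>0$. $\mathcal{M}(\varphi)=(\int_0^\infty x^p\varphi(x)\,dx)_{p\in\mathbb{N}_0}$. *)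

theory Defs
  imports "HOL-Analysis.Analysis"
begin

definition quot_seq :: "(nat \<Rightarrow> real) \<Rightarrow> nat \<Rightarrow> real" where
  "quot_seq M p = M (Suc p) / M p"

definition weight_sequence :: "(nat \<Rightarrow> real) \<Rightarrow> bool" where
  "weight_sequence M \<longleftrightarrow>
     (\<forall>p. M p > 0) \<and> M 0 = 1 \<and>
     (\<forall>p\<ge>1. (M p)^2 \<le> M (p - 1) * M (p + 1)) \<and>
     filterlim (quot_seq M) at_top sequentially"

definition dc :: "(nat \<Rightarrow> real) \<Rightarrow> bool" where
  "dc M \<longleftrightarrow> (\<exists>C0>0. \<exists>H>1. \<forall>p. M (Suc p) \<le> C0 * H ^ (Suc p) * M p)"

definition almost_increasing :: "(nat \<Rightarrow> real) \<Rightarrow> bool" where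
  "almost_increasing c \<longleftrightarrow> (\<exists>a>0. \<forall>p q. p \<le> q \<longrightarrow> c p \<le> a * c q)"

text \<open>gamma(M) = sup of admissible mu > 0, with the convention sup {} = 0 (value in [0,\<infinity>]).\<close>
definition gamma_idx :: "(nat \<Rightarrow> real) \<Rightarrow> ereal" where
  "gamma_idx M = Sup (insert 0 (ereal ` {\<mu>. \<mu> > 0 \<and>
      almost_increasing (\<lambda>p. quot_seq M p / (real (p + 1)) powr \<mu>)}))"

definition C_Roumieu :: "(nat \<Rightarrow> real) \<Rightarrow> (real \<Rightarrow> complex) set" where
  "C_Roumieu M = {\<phi>. continuous_on {0<..} \<phi> \<and>
     (\<exists>h>0. \<exists>C. \<forall>p. \<forall>x>0. x ^ p * norm (\<phi> x) \<le> C * h ^ p * M p)}"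

definition Lambda_Roumieu :: "(nat \<Rightarrow> real) \<Rightarrow> (nat \<Rightarrow> complex) set" where
  "Lambda_Roumieu M = {c. \<exists>h>0. \<exists>C. \<forall>p. norm (c p) \<le> C * h ^ p * M p}"

definition moment_map :: "(real \<Rightarrow> complex) \<Rightarrow> nat \<Rightarrow> complex" where
  "moment_map \<phi> p = set_lebesgue_integral lborel {0<..} (\<lambda>x. complex_of_real (x ^ p) * \<phi> x)"

end

theory Submission imports Defs "HOL-Probability.Sinc_Integral"
begin

lemma moment_bound:
  fixes \<phi> :: "real \<Rightarrow> complex"
  assumes cont: "continuous_on {0<..} \<phi>"
    and bA: "\<And>x. x > 0 \<Longrightarrow> x ^ p * norm (\<phi> x) \<le> A"
    and bB: "\<And>x. x > 0 \<Longrightarrow> x ^ (p+2) * norm (\<phi> x) \<le> B"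
  shows "set_integrable lborel {0<..} (\<lambda>x. complex_of_real (x ^ p) * \<phi> x)"
    and "norm (moment_map \<phi> p) \<le> (A + B) * 2"
proof -
  define g where "g x = (A + B) * (1 / (1 + x^2))" for x :: real
  have gi0: "set_integrable lborel {0<..} (\<lambda>x::real. 1 / (1 + x^2))"
    using integrable_I0i_1_div_plus_square unfolding interval_lebesgue_integrable_def
    by (simp add: einterval_def zero_ereal_def greaterThan_def)
  have gint0: "(LINT x:{0<..}|lborel. 1 / (1 + x^2)) = pi / 2"
    using LBINT_I0i_1_div_plus_square unfolding interval_lebesgue_integral_def
    by (simp add: einterval_def zero_ereal_def greaterThan_def)
  have gi: "set_integrable lborel {0<..} g"
    unfolding g_def using gi0 by (rule set_integrable_mult_right)
  have gint: "(LINT x:{0<..}|lborel. g x) = (A + B) * (pi / 2)"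
    unfolding g_def by (simp only: set_integral_mult_right gint0)
  have meas: "set_borel_measurable lborel {0<..} (\<lambda>x. complex_of_real (x ^ p) * \<phi> x)"
    unfolding set_borel_measurable_def
    unfolding measurable_lborel2 by (rule borel_measurable_continuous_on_indicator)
       (auto intro!: continuous_intros cont)
  have nb: "norm (complex_of_real (x ^ p) * \<phi> x) \<le> g x" if "x > 0" for x
  proof -
    have "x ^ p * norm (\<phi> x) * (1 + x^2) = x ^ p * norm (\<phi> x) + x ^ (p+2) * norm (\<phi> x)"
      by (simp add: algebra_simps power_add power2_eq_square)
    also have "\<dots> \<le> A + B" using bA[OF that] bB[OF that] by simp
    finally have "x ^ p * norm (\<phi> x) \<le> (A + B) / (1 + x^2)"
      by (simp add: field_simps add_pos_nonneg)
    then show ?thesis using that by (simp add: g_def norm_mult norm_power)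
  qed
  show si: "set_integrable lborel {0<..} (\<lambda>x. complex_of_real (x ^ p) * \<phi> x)"
    apply (rule set_integrable_bound[OF gi meas])
    using nb by (auto intro!: AE_I2 order_trans[OF _ abs_ge_self])
  have "norm (moment_map \<phi> p) \<le> (LINT x:{0<..}|lborel. norm (complex_of_real (x ^ p) * \<phi> x))"
    unfolding moment_map_def by (rule set_integral_norm_bound[OF si])
  also have "\<dots> \<le> (LINT x:{0<..}|lborel. g x)"
    by (rule set_integral_mono[OF set_integrable_norm[OF si] gi]) (use nb in auto)
  also have "\<dots> \<le> (A + B) * 2"
  proof -
    have "0 \<le> A" using bA[of 1] by (auto intro: order_trans[OF norm_ge_zero])
    moreover have "0 \<le> B" using bB[of 1] by (auto intro: order_trans[OF norm_ge_zero])
    ultimately have "(A + B) * pi \<le> (A + B) * 4" using pi_less_4 by (intro mult_left_mono) auto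
    then show ?thesis using gint by simp
  qed
  finally show "norm (moment_map \<phi> p) \<le> (A + B) * 2" .
qed

lemma ws_pos: "weight_sequence M \<Longrightarrow> M p > 0"
  unfolding weight_sequence_def by auto

lemma dc_imp_incl:
  assumes ws: "weight_sequence M" and dcM: "dc M"
  shows "moment_map ` C_Roumieu M \<subseteq> Lambda_Roumieu M"
proof
  fix c assume "c \<in> moment_map ` C_Roumieu M"
  then obtain \<phi> where c: "c = moment_map \<phi>" and ph: "\<phi> \<in> C_Roumieu M" by auto
  from ph obtain h C where cont: "continuous_on {0<..} \<phi>" and h: "h > 0"
    and b: "\<And>p x. x > 0 \<Longrightarrow> x ^ p * norm (\<phi> x) \<le> C * h ^ p * M p"
    unfolding C_Roumieu_def by auto
  from dcM obtain C0 H where C0: "C0 > 0" and H: "H > 1"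
    and d: "\<And>p. M (Suc p) \<le> C0 * H ^ Suc p * M p" unfolding dc_def by auto
  have M0: "M 0 = 1" using ws unfolding weight_sequence_def by auto
  have C: "C \<ge> 0" using b[of 1 0] M0 by (auto intro: order_trans[OF norm_ge_zero])
  have d2: "M (p + 2) \<le> C0^2 * H^3 * (H^2)^p * M p" for p
  proof -
    have "M (p + 2) \<le> C0 * H ^ (p+2) * M (Suc p)" using d[of "Suc p"] by simp
    also have "\<dots> \<le> C0 * H ^ (p+2) * (C0 * H ^ Suc p * M p)"
      using d[of p] C0 H by (intro mult_left_mono) auto
    also have "\<dots> = C0^2 * (H ^ (p+2) * H ^ Suc p) * M p"
      by (simp add: power2_eq_square mult_ac)
    also have "H ^ (p+2) * H ^ Suc p = H^3 * (H^2)^p"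
    proof -
      have e: "(p+2) + Suc p = 3 + 2 * p" by simp
      have "H ^ (p+2) * H ^ Suc p = H ^ (3 + 2 * p)" by (metis power_add e)
      also have "\<dots> = H^3 * (H^2)^p" by (simp add: power_add power_mult)
      finally show ?thesis .
    qed
    finally show ?thesis by (simp add: mult_ac)
  qed
  define K where "K = 2 * C * (1 + h^2 * C0^2 * H^3)"
  have "norm (c p) \<le> K * (h * H^2) ^ p * M p" for p
  proof -
    have "norm (c p) \<le> (C * h ^ p * M p + C * h ^ (p+2) * M (p+2)) * 2"
      unfolding c by (rule moment_bound(2)[OF cont]) (use b in presburger)+
    also have "\<dots> \<le> K * (h * H^2) ^ p * M p"
    proof -
      have Mp: "M p > 0" by (rule ws_pos[OF ws])
      have H1: "1 \<le> (H^2)^p" using H by simp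
      have e1: "C * h ^ p * M p \<le> C * (h * H^2) ^ p * M p"
      proof -
        have "h ^ p \<le> h ^ p * (H^2)^p" using H1 h by simp
        then have "C * h ^ p * M p \<le> C * (h ^ p * (H^2)^p) * M p"
          using C Mp by (intro mult_right_mono mult_left_mono) auto
        then show ?thesis by (simp add: power_mult_distrib)
      qed
      have "C * h ^ (p+2) * M (p+2) \<le> C * h ^ (p+2) * (C0^2 * H^3 * (H^2)^p * M p)"
        using d2[of p] C h by (intro mult_left_mono) auto
      also have "\<dots> = C * h^2 * C0^2 * H^3 * (h * H^2) ^ p * M p"
        by (simp add: power_add power_mult_distrib power2_eq_square mult_ac)
      finally show ?thesis using e1 unfolding K_def by (simp add: algebra_simps)
    qed
    finally show ?thesis .
  qed
  moreover have "h * H^2 > 0" using h H by simp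
  ultimately show "c \<in> Lambda_Roumieu M" unfolding Lambda_Roumieu_def by blast
qed

fun gmin :: "(nat \<Rightarrow> real) \<Rightarrow> nat \<Rightarrow> real \<Rightarrow> real" where
  "gmin M 0 x = 1"
| "gmin M (Suc n) x = min (gmin M n x) (M (Suc n) / x ^ Suc n)"

definition phi :: "(nat \<Rightarrow> real) \<Rightarrow> real \<Rightarrow> real" where
  "phi M x = gmin M (LEAST n. x \<le> quot_seq M n) x"

context
  fixes M :: "nat \<Rightarrow> real"
  assumes ws: "weight_sequence M"
begin

lemma Mpos: "M p > 0" using ws unfolding weight_sequence_def by auto

lemma M0: "M 0 = 1" using ws unfolding weight_sequence_def by auto

lemma mpos: "quot_seq M p > 0" using Mpos[of p] Mpos[of "Suc p"] by (simp add: quot_seq_def)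

lemma MSuc: "M (Suc p) = quot_seq M p * M p"
  using Mpos[of p] by (simp add: quot_seq_def)

lemma m_step: "quot_seq M p \<le> quot_seq M (Suc p)"
proof -
  have "(M (Suc p))^2 \<le> M p * M (Suc (Suc p))"
    using ws unfolding weight_sequence_def by (auto dest!: spec[of _ "Suc p"])
  then show ?thesis using Mpos[of p] Mpos[of "Suc p"]
    by (simp add: quot_seq_def divide_simps power2_eq_square mult_ac)
qed

lemma m_mono: "p \<le> q \<Longrightarrow> quot_seq M p \<le> quot_seq M q"
  by (induction q rule: dec_induct) (auto intro: order_trans[OF _ m_step])

lemma m_unbounded: "\<exists>n. x < quot_seq M n"
proof -
  have "filterlim (quot_seq M) at_top sequentially"
    using ws unfolding weight_sequence_def by auto
  then have "eventually (\<lambda>n. quot_seq M n > x) sequentially"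
    by (simp add: filterlim_at_top_dense)
  then show ?thesis by (metis eventually_sequentially order_refl)
qed

lemma term_up:
  assumes "x > 0" "x \<le> quot_seq M n" "n \<le> q"
  shows "M n / x ^ n \<le> M q / x ^ q"
  using assms(3)
proof (induction q rule: dec_induct)
  case base then show ?case by simp
next
  case (step k)
  have "x \<le> quot_seq M k" using assms(2) m_mono[OF step(1)] by simp
  then have "M k / x ^ k \<le> M (Suc k) / x ^ Suc k"
    using assms(1) Mpos[of k] by (simp add: MSuc divide_simps mult_right_mono mult_ac)
  then show ?case using step by simp
qed

lemma gmin_le: "q \<le> N \<Longrightarrow> gmin M N x \<le> M q / x ^ q"
proof (induction N)
  case 0 then show ?case using M0 by simp
next
  case (Suc N)
  then show ?case by (cases "q = Suc N") (auto simp: min.coboundedI1)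
qed

lemma gmin_ge: "(\<And>q. q \<le> N \<Longrightarrow> B \<le> M q / x ^ q) \<Longrightarrow> B \<le> gmin M N x"
proof (induction N)
  case 0 then show ?case using M0 by (metis gmin.simps(1) le_refl power_0 div_by_1)
next
  case (Suc N)
  have "B \<le> gmin M N x" by (rule Suc.IH) (use Suc.prems in auto)
  moreover have "B \<le> M (Suc N) / x ^ Suc N" by (rule Suc.prems) simp
  ultimately show ?case by simp
qed

lemma gmin_pos: "x > 0 \<Longrightarrow> gmin M N x > 0"
  by (induction N) (auto simp: Mpos)

lemma gmin_const:
  assumes "x > 0" "x \<le> quot_seq M n" "n \<le> N"
  shows "gmin M N x = gmin M n x"
  using assms(3)
proof (induction N rule: dec_induct)
  case base then show ?case by simp
next
  case (step k)
  have "gmin M k x \<le> M n / x ^ n" using step gmin_le[of n n x] by simp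
  also have "\<dots> \<le> M (Suc k) / x ^ Suc k" by (rule term_up[OF assms(1,2)]) (use step(1) in simp)
  finally show ?case using step by simp
qed

lemma phi_eq:
  assumes "x > 0" "x \<le> quot_seq M N"
  shows "phi M x = gmin M N x"
proof -
  define n where "n = (LEAST n. x \<le> quot_seq M n)"
  have ex: "\<exists>n. x \<le> quot_seq M n" using m_unbounded[of x] by (auto intro: less_imp_le)
  have n: "x \<le> quot_seq M n" unfolding n_def by (rule LeastI_ex[OF ex])
  have "gmin M (max n N) x = gmin M n x" by (rule gmin_const[OF assms(1) n]) simp
  moreover have "gmin M (max n N) x = gmin M N x" by (rule gmin_const[OF assms]) simp
  ultimately show ?thesis unfolding phi_def n_def[symmetric] by simp
qed

lemma gmin_cont: "continuous_on {0<..} (gmin M N)"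
  by (induction N) (auto intro!: continuous_intros)

lemma phi_cont: "continuous_on {0<..} (phi M)"
proof -
  have "isCont (phi M) x0" if "x0 > 0" for x0
  proof -
    obtain N where N: "x0 < quot_seq M N" using m_unbounded by blast
    have "eventually (\<lambda>x. x \<in> {0<..<quot_seq M N}) (nhds x0)"
      using that N by (intro eventually_nhds_in_open) auto
    then have ev: "eventually (\<lambda>x. phi M x = gmin M N x) (nhds x0)"
      by eventually_elim (auto intro: phi_eq)
    have "isCont (gmin M N) x0"
      using gmin_cont[of N] that by (simp add: continuous_on_eq_continuous_at)
    then show ?thesis using isCont_cong[OF ev] by simp
  qed
  then show ?thesis by (simp add: continuous_at_imp_continuous_on)
qed

lemma phi_bound:
  assumes "x > 0" shows "x ^ p * phi M x \<le> M p"
proof -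
  obtain N where N: "x < quot_seq M N" using m_unbounded by blast
  have "x \<le> quot_seq M (max N p)" using N m_mono[of N "max N p"] by simp
  then have "phi M x = gmin M (max N p) x" by (rule phi_eq[OF assms])
  also have "\<dots> \<le> M p / x ^ p" by (rule gmin_le) simp
  finally show ?thesis using assms by (simp add: field_simps)
qed

lemma phi_pos: "x > 0 \<Longrightarrow> phi M x > 0"
  unfolding phi_def by (rule gmin_pos)

lemma term_down:
  assumes "x > 0" "quot_seq M p \<le> x" "q \<le> Suc p"
  shows "M (Suc p) / x ^ Suc p \<le> M q / x ^ q"
  using assms(3)
proof (induction rule: dec_induct)
  case base then show ?case by simp
next
  case (step k)
  have "quot_seq M k \<le> x" using assms(2) m_mono[of k p] step(2) by simp
  then have "M (Suc k) / x ^ Suc k \<le> M k / x ^ k"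
    using assms(1) Mpos[of k] by (simp add: MSuc divide_simps mult_right_mono mult_ac)
  then show ?case using step by simp
qed

lemma term_half:
  assumes "x > 0" "x \<le> 2 * quot_seq M p" "Suc p \<le> q"
  shows "M (Suc p) / x ^ Suc p * (1/2) ^ (q - Suc p) \<le> M q / x ^ q"
  using assms(3)
proof (induction rule: dec_induct)
  case base then show ?case by simp
next
  case (step k)
  have "x \<le> 2 * quot_seq M k" using assms(2) m_mono[of p k] step(1) by simp
  then have h: "1/2 \<le> quot_seq M k / x" using assms(1) by (simp add: field_simps)
  have "M (Suc p) / x ^ Suc p * (1/2) ^ (Suc k - Suc p)
      = (M (Suc p) / x ^ Suc p * (1/2) ^ (k - Suc p)) * (1/2)"
  proof -
    have "Suc k - Suc p = Suc (k - Suc p)" using step(1) by simp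
    then show ?thesis by (simp only: power_Suc mult_ac)
  qed
  also have "\<dots> \<le> M k / x ^ k * (quot_seq M k / x)"
    using step(3) h Mpos[of "Suc p"] Mpos[of k] assms(1) by (intro mult_mono) auto
  also have "\<dots> = M (Suc k) / x ^ Suc k"
    using assms(1) by (simp add: MSuc field_simps)
  finally show ?case .
qed

lemma term_all:
  assumes "x > 0" "quot_seq M p \<le> x" "x \<le> 2 * quot_seq M p"
  shows "M (Suc p) / x ^ Suc p * (1/2) ^ q \<le> M q / x ^ q"
proof (cases "q \<le> Suc p")
  case True
  have "M (Suc p) / x ^ Suc p * (1/2) ^ q \<le> M (Suc p) / x ^ Suc p"
    using Mpos[of "Suc p"] assms(1) by (intro mult_left_le) (auto simp: power_le_one)
  also have "\<dots> \<le> M q / x ^ q" by (rule term_down[OF assms(1,2) True])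
  finally show ?thesis .
next
  case False
  have "(1/2::real) ^ q \<le> (1/2) ^ (q - Suc p)" by (rule power_decreasing) auto
  then have "M (Suc p) / x ^ Suc p * (1/2) ^ q \<le> M (Suc p) / x ^ Suc p * (1/2) ^ (q - Suc p)"
    using Mpos[of "Suc p"] assms(1) by (intro mult_left_mono) auto
  also have "\<dots> \<le> M q / x ^ q" by (rule term_half[OF assms(1,3)]) (use False in simp)
  finally show ?thesis .
qed

lemma phi_lower:
  assumes "quot_seq M p \<le> x" "x \<le> 2 * quot_seq M p" "x \<le> quot_seq M N"
  shows "M (Suc p) / x ^ Suc p * (1/2) ^ N \<le> phi M x"
proof -
  have x: "x > 0" using assms(1) mpos[of p] by simp
  have "M (Suc p) / x ^ Suc p * (1/2) ^ N \<le> gmin M N x"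
  proof (rule gmin_ge)
    fix q assume q: "q \<le> N"
    have "M (Suc p) / x ^ Suc p * (1/2) ^ N \<le> M (Suc p) / x ^ Suc p * (1/2) ^ q"
      using q Mpos[of "Suc p"] x by (intro mult_left_mono power_decreasing) auto
    also have "\<dots> \<le> M q / x ^ q" by (rule term_all[OF x assms(1,2)])
    finally show "M (Suc p) / x ^ Suc p * (1/2) ^ N \<le> M q / x ^ q" .
  qed
  then show ?thesis using phi_eq[OF x assms(3)] by simp
qed

lemma gamma_L:
  assumes g: "gamma_idx M > 0"
  shows "\<exists>L::nat. L \<ge> 1 \<and> (\<forall>p. 2 * quot_seq M p \<le> quot_seq M (L * Suc p - 1))"
proof -
  let ?S = "{\<mu>. \<mu> > 0 \<and> almost_increasing (\<lambda>p. quot_seq M p / (real (p + 1)) powr \<mu>)}"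
  have "?S \<noteq> {}"
  proof
    assume "?S = {}"
    then have "gamma_idx M = 0" unfolding gamma_idx_def by (simp only: image_empty) simp
    with g show False by simp
  qed
  then obtain \<mu> a where mu: "\<mu> > 0" and a: "a > 0"
    and ai: "\<And>p q. p \<le> q \<Longrightarrow> quot_seq M p / (real (p + 1)) powr \<mu>
              \<le> a * (quot_seq M q / (real (q + 1)) powr \<mu>)"
    unfolding almost_increasing_def by blast
  define L where "L = nat \<lceil>(2 * a) powr (1 / \<mu>)\<rceil> + 1"
  have L1: "L \<ge> 1" unfolding L_def by simp
  have "(2 * a) powr (1 / \<mu>) \<le> real L" unfolding L_def by linarith
  then have "((2 * a) powr (1 / \<mu>)) powr \<mu> \<le> real L powr \<mu>"
    using mu by (intro powr_mono2) auto
  then have LL: "2 * a \<le> real L powr \<mu>" using mu a by (simp add: powr_powr)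
  have "2 * quot_seq M p \<le> quot_seq M (L * Suc p - 1)" for p
  proof -
    define N where "N = L * Suc p - 1"
    have N1: "real (N + 1) = real L * real (p + 1)" unfolding N_def using L1
      by (simp add: of_nat_diff algebra_simps)
    have pN: "p \<le> N" unfolding N_def using L1
      by (metis Suc_le_eq diff_Suc_1 diff_le_mono mult_1 mult_le_mono1)
    have pos: "real (p + 1) powr \<mu> > 0" by simp
    have "quot_seq M p / (real (p + 1)) powr \<mu> \<le> a * (quot_seq M N / (real (N + 1)) powr \<mu>)"
      by (rule ai[OF pN])
    also have "real (N + 1) powr \<mu> = real L powr \<mu> * real (p+1) powr \<mu>"
      unfolding N1 by (rule powr_mult)
    finally have "quot_seq M p * (real L powr \<mu>) \<le> a * quot_seq M N"
      using pos L1 by (simp add: field_simps)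
    moreover have "2 * a * quot_seq M p \<le> real L powr \<mu> * quot_seq M p"
      using LL mpos[of p] by (intro mult_right_mono) auto
    ultimately have "a * (2 * quot_seq M p) \<le> a * quot_seq M N" by (simp add: mult_ac)
    then show ?thesis unfolding N_def using a by simp
  qed
  then show ?thesis using L1 by blast
qed

lemma incl_imp_dc:
  assumes g: "gamma_idx M > 0" and incl: "moment_map ` C_Roumieu M \<subseteq> Lambda_Roumieu M"
  shows "dc M"
proof -
  obtain L :: nat where L1: "L \<ge> 1" and Lm: "\<And>p. 2 * quot_seq M p \<le> quot_seq M (L * Suc p - 1)"
    using gamma_L[OF g] by blast
  define \<phi> where "\<phi> x = complex_of_real (phi M x)" for x
  have cont: "continuous_on {0<..} \<phi>"
    unfolding \<phi>_def by (intro continuous_intros phi_cont)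
  have nphi: "norm (\<phi> x) = phi M x" if "x > 0" for x
    unfolding \<phi>_def using phi_pos[OF that] by simp
  have bnd: "x ^ p * norm (\<phi> x) \<le> M p" if "x > 0" for x p
    using phi_bound[OF that] nphi[OF that] by simp
  have "\<phi> \<in> C_Roumieu M" unfolding C_Roumieu_def
    using cont bnd by (auto intro!: exI[of _ 1])
  then have "moment_map \<phi> \<in> Lambda_Roumieu M" using incl by blast
  then obtain h C where h: "h > 0" and hb: "\<And>p. norm (moment_map \<phi> p) \<le> C * h ^ p * M p"
    unfolding Lambda_Roumieu_def by blast
  have C: "C \<ge> 0" using hb[of 0] M0 by (auto intro: order_trans[OF norm_ge_zero])
  define r :: real where "r = (1/2) ^ L"
  have r: "r > 0" "r \<le> 1" unfolding r_def by (auto simp: power_le_one)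
  have key: "M (Suc p) * r ^ Suc p / 2 \<le> C * h ^ p * M p" for p
  proof -
    define f where "f x = x ^ p * phi M x" for x
    define N where "N = L * Suc p - 1"
    define mp where "mp = quot_seq M p"
    have mp: "mp > 0" unfolding mp_def by (rule mpos)
    define K where "K = M (Suc p) / (2 * mp) * (1/2) ^ N"
    have si: "set_integrable lborel {0<..} (\<lambda>x. complex_of_real (x ^ p) * \<phi> x)"
      by (rule moment_bound(1)[OF cont, of p "M p" "M (p+2)"]) (use bnd in presburger)+
    have eqc: "complex_of_real (x ^ p) * \<phi> x = complex_of_real (f x)" for x
      unfolding f_def \<phi>_def by simp
    have si2: "integrable lborel (\<lambda>x. indicator {0<..} x * f x)"
    proof -
      have "integrable lborel (\<lambda>x. Re (indicator {0<..} x *\<^sub>R (complex_of_real (x ^ p) * \<phi> x)))"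
        using si unfolding set_integrable_def by (rule integrable_Re)
      then show ?thesis unfolding eqc by simp
    qed
    have mom: "moment_map \<phi> p = complex_of_real (integral\<^sup>L lborel (\<lambda>x. indicator {0<..} x * f x))"
      unfolding moment_map_def eqc set_integral_complex_of_real
      by (simp add: set_lebesgue_integral_def)
    have low: "K * indicator {mp..2*mp} x \<le> indicator {0<..} x * f x" for x
    proof (cases "x \<in> {mp..2*mp}")
      case True
      then have x: "x > 0" "mp \<le> x" "x \<le> 2 * mp" using mp by auto
      have xN: "x \<le> quot_seq M N" using Lm[of p] x unfolding N_def mp_def by simp
      have "M (Suc p) / x ^ Suc p * (1/2) ^ N \<le> phi M x"
        by (rule phi_lower[OF x(2,3)[unfolded mp_def] xN])
      then have "x ^ p * (M (Suc p) / x ^ Suc p * (1/2) ^ N) \<le> f x"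
        unfolding f_def using x by (intro mult_left_mono) auto
      moreover have "x ^ p * (M (Suc p) / x ^ Suc p * (1/2) ^ N) = M (Suc p) / x * (1/2) ^ N"
        using x by (simp add: field_simps)
      moreover have "M (Suc p) / (2 * mp) \<le> M (Suc p) / x"
        using x Mpos[of "Suc p"] by (intro divide_left_mono) auto
      ultimately have "K \<le> f x" unfolding K_def
        by (smt (verit) mult_right_mono zero_le_power zero_le_divide_1_iff)
      then show ?thesis using True x by simp
    next
      case False
      have "0 \<le> indicator {0<..} x * f x"
        by (cases "x > 0") (auto simp: f_def intro!: mult_nonneg_nonneg less_imp_le[OF phi_pos])
      then show ?thesis using False by simp
    qed
    have "K * mp = integral\<^sup>L lborel (\<lambda>x. K * indicator {mp..2*mp} x)"
      using mp by simp
    also have "\<dots> \<le> integral\<^sup>L lborel (\<lambda>x. indicator {0<..} x * f x)"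
      by (rule integral_mono[OF _ si2 low]) (use mp in \<open>auto intro!: integrable_real_indicator\<close>)
    also have "\<dots> \<le> norm (moment_map \<phi> p)" unfolding mom by simp
    also have "\<dots> \<le> C * h ^ p * M p" by (rule hb)
    finally have A: "K * mp \<le> C * h ^ p * M p" .
    have "K * mp = M (Suc p) * (1/2) ^ N / 2" unfolding K_def using mp by simp
    moreover have "r ^ Suc p \<le> (1/2) ^ N"
    proof -
      have "r ^ Suc p = (1/2) ^ (L * Suc p)" unfolding r_def by (rule power_mult[symmetric])
      also have "\<dots> \<le> (1/2) ^ N" unfolding N_def by (rule power_decreasing) auto
      finally show ?thesis .
    qed
    ultimately show ?thesis using A Mpos[of "Suc p"]
      by (smt (verit) divide_right_mono mult_left_mono)
  qed
  define C0 where "C0 = 2 * C / r + 1"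
  define H where "H = h / r + 2"
  have "M (Suc p) \<le> C0 * H ^ Suc p * M p" for p
  proof -
    have "M (Suc p) \<le> (2 * C / r) * (h / r) ^ p * M p"
      using key[of p] r by (simp add: field_simps power_divide)
    also have "\<dots> \<le> C0 * H ^ p * M p"
      unfolding C0_def H_def using C r h Mpos[of p]
      by (intro mult_right_mono mult_mono power_mono) auto
    also have "\<dots> \<le> C0 * H ^ Suc p * M p"
    proof -
      have "H ^ p \<le> H ^ Suc p" unfolding H_def using r h by (intro power_increasing) auto
      moreover have "C0 \<ge> 0" unfolding C0_def using C r by auto
      ultimately show ?thesis using Mpos[of p] by (intro mult_right_mono mult_left_mono) auto
    qed
    finally show ?thesis .
  qed
  moreover have "C0 > 0" unfolding C0_def using C r by (simp add: add_nonneg_pos)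
  moreover have "H > 1" unfolding H_def using r h by (smt (verit) divide_pos_pos)
  ultimately show ?thesis unfolding dc_def by blast
qed

end

theorem proposition3p3:
  fixes M :: "nat \<Rightarrow> real"
  assumes "weight_sequence M" and "gamma_idx M > 0"
  shows "moment_map ` C_Roumieu M \<subseteq> Lambda_Roumieu M \<longleftrightarrow> dc M"
  using incl_imp_dc[OF assms(1,2)] dc_imp_incl[OF assms(1)] by blast

end
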